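(* Let $J=\{2\}^*\{1\}\{2\}^*\{1\}^*\cup\{2\}^*\subseteq\mathcal{A}_2^*$. Then $(\mathcal{A}_2,J)$ is a biautomatic structure for $\mathrm{rps}_2$.
   Context: Let $\mathcal{A}_2=\{1<2\}$. An rPS tableau is a finite (possibly empty) sequence of nonempty bottom-justified columns of boxes filled with positive integers, such that the entries of each column are weakly decreasing from top to bottom and the bottom entries of the columns form a strictly increasing sequence from left to right. Right insertion of a symbol $a$ into an rPS tableau $B$: if $a$ is strictly greater than every entry of the bottom row, append a new column consisting of $a$ at the right end; otherwise, let $z$ be the leftmost bottom-row entry with $z\geq a$ and put $a$ in a new box at the bottom of the column of $z$ (the previous entries of that column move up one box). For $w=w_1\cdots w_k$, $\mathfrak{R}_r(w)$ is obtained by starting with the empty tableau and right-inserting $w_1,\dots,w_k$ in order. The monoid $\mathrm{rps}_2$ is the quotient of $\mathcal{A}_2^*$ by the congruence $u\equiv v\iff\mathfrak{R}_r(u)=\mathfrak{R}_r(v)$; words are identified with the elements they represent. For an alphabet $\Sigma$ and a padding symbol $\$\notin\Sigma$, $\delta_R:\Sigma^*\times\Sigma^*\to((\Sigma\cup\{\$\})\times(\Sigma\cup\{\$\}))^*$ sends $(u_1\cdots u_m,v_1\cdots v_p)$ to the word of pairs $(u_i,v_i)$ obtained after padding the shorter word on the right with $\$$'s to equal length; $\delta_L$ is the same with padding on the left. For a monoid $M$ generated by finite $\Sigma$ and a regular language $L\subseteq\Sigma^*$ mapping onto $M$, define $L_a=\{(u,v)\in L\times L: ua=_M v\}$ and ${}_aL=\{(u,v)\in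 L\times L: au=_M v\}$. $(\Sigma,L)$ is a biautomatic structure for $M$ if $(L_a)\delta_R$, $({}_aL)\delta_R$, $(L_a)\delta_L$ and $({}_aL)\delta_L$ are regular languages for every $a\in\Sigma\cup\{\varepsilon\}$. *)

theory Defs
  imports Main
begin

text \<open>Symbols of A_2 = {1 < 2} are the natural numbers 1 and 2; words are lists.
An rPS tableau is a list of columns (left to right); each column is a list
read from bottom to top (head = bottom entry).\<close>

type_synonym tableau = "nat list list"

fun rinsert :: "nat \<Rightarrow> tableau \<Rightarrow> tableau" where
  "rinsert a [] = [[a]]"
| "rinsert a (c # cs) =
     (if c \<noteq> [] \<and> a \<le> hd c then (a # c) # cs else c # rinsert a cs)"

definition Rr :: "nat list \<Rightarrow> tableau" where
  "Rr w = foldl (\<lambda>T a. rinsert a T) [] w"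

definition A2 :: "nat set" where "A2 = {1, 2}"

definition rps_eq :: "nat list \<Rightarrow> nat list \<Rightarrow> bool" where
  "rps_eq u v \<longleftrightarrow> Rr u = Rr v"

text \<open>Padded convolutions; None plays the role of the padding symbol.\<close>
definition deltaR :: "'a list \<Rightarrow> 'a list \<Rightarrow> ('a option \<times> 'a option) list" where
  "deltaR u v = (let n = max (length u) (length v) in
     zip (map Some u @ replicate (n - length u) None)
         (map Some v @ replicate (n - length v) None))"

definition deltaL :: "'a list \<Rightarrow> 'a list \<Rightarrow> ('a option \<times> 'a option) list" where
  "deltaL u v = (let n = max (length u) (length v) in
     zip (replicate (n - length u) None @ map Some u)
         (replicate (n - length v) None @ map Some v))"

definition regular :: "'b list set \<Rightarrow> bool" where
  "regular L \<longleftrightarrow> (\<exists>(Q::nat set) q0 (\<delta>::nat \<Rightarrow> 'b \<Rightarrow> nat) F.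
      finite Q \<and> q0 \<in> Q \<and> (\<forall>q\<in>Q. \<forall>x. \<delta> q x \<in> Q) \<and> F \<subseteq> Q \<and>
      L = {w. foldl \<delta> q0 w \<in> F})"

definition biautomatic :: "'a set \<Rightarrow> ('a list \<Rightarrow> 'a list \<Rightarrow> bool) \<Rightarrow> 'a list set \<Rightarrow> bool" where
  "biautomatic \<Sigma> eq L \<longleftrightarrow>
     finite \<Sigma> \<and> L \<subseteq> lists \<Sigma> \<and> regular L \<and>
     (\<forall>w\<in>lists \<Sigma>. \<exists>u\<in>L. eq u w) \<and>
     (\<forall>a \<in> {[]} \<union> {[x] |x. x \<in> \<Sigma>}.
        regular ((\<lambda>(u,v). deltaR u v) ` {(u,v). u \<in> L \<and> v \<in> L \<and> eq (u @ a) v}) \<and>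
        regular ((\<lambda>(u,v). deltaR u v) ` {(u,v). u \<in> L \<and> v \<in> L \<and> eq (a @ u) v}) \<and>
        regular ((\<lambda>(u,v). deltaL u v) ` {(u,v). u \<in> L \<and> v \<in> L \<and> eq (u @ a) v}) \<and>
        regular ((\<lambda>(u,v). deltaL u v) ` {(u,v). u \<in> L \<and> v \<in> L \<and> eq (a @ u) v}))"

definition J :: "nat list set" where
  "J = {replicate i 2 @ [1] @ replicate j 2 @ replicate k 1 | i j k. True}
       \<union> {replicate i 2 | i. True}"

end

theory Submission
  imports Defs
begin

definition Der :: "'b list \<Rightarrow> 'b list set \<Rightarrow> 'b list set" where
  "Der w L = {v. w @ v \<in> L}"

definition fq :: "'b list set \<Rightarrow> bool" where
  "fq L \<longleftrightarrow> finite (range (\<lambda>w. Der w L))"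

lemma Der_Nil[simp]: "Der [] L = L" by (simp add: Der_def)
lemma Der_Der: "Der [x] (Der w L) = Der (w @ [x]) L" by (simp add: Der_def)

lemma fq_regular:
  assumes "fq L" shows "regular L"
proof -
  let ?D = "range (\<lambda>w. Der w L)"
  have fin: "finite ?D" using assms by (simp add: fq_def)
  from finite_imp_nat_seg_image_inj_on[OF fin]
  obtain n and f :: "nat \<Rightarrow> 'a list set" where D: "?D = f ` {i. i < n}" and inj: "inj_on f {i. i < n}"
    by (elim exE conjE)
  define idx where "idx X = inv_into {i. i < n} f X" for X
  define \<delta> where "\<delta> q x = idx (Der [x] (f q))" for q x
  define q0 where "q0 = idx L"
  define F where "F = {q. q < n \<and> [] \<in> f q}"
  have mem: "idx (Der w L) < n \<and> f (idx (Der w L)) = Der w L" for w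
  proof -
    have m: "Der w L \<in> f ` {i. i < n}" using D by blast
    have "inv_into {i. i < n} f (Der w L) \<in> {i. i < n}" by (rule inv_into_into[OF m])
    moreover have "f (inv_into {i. i < n} f (Der w L)) = Der w L" by (rule f_inv_into_f[OF m])
    ultimately show ?thesis unfolding idx_def by simp
  qed
  have key: "foldl \<delta> q0 w = idx (Der w L)" for w
  proof (induction w rule: rev_induct)
    case Nil then show ?case by (simp add: q0_def)
  next
    case (snoc x w)
    then show ?case using mem[of w] by (simp add: \<delta>_def Der_Der)
  qed
  have cl: "\<forall>q\<in>{i. i < n}. \<forall>x. \<delta> q x \<in> {i. i < n}"
  proof (intro ballI allI)
    fix q x assume "q \<in> {i. i < n}"
    then have "f q \<in> ?D" using D by blast
    then obtain w where "f q = Der w L" by blast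
    then show "\<delta> q x \<in> {i. i < n}" using mem[of "w @ [x]"] by (simp add: \<delta>_def Der_Der)
  qed
  have "L = {w. foldl \<delta> q0 w \<in> F}"
  proof -
    have "w \<in> L \<longleftrightarrow> foldl \<delta> q0 w \<in> F" for w
      using mem[of w] key[of w] by (auto simp: F_def Der_def)
    then show ?thesis by blast
  qed
  moreover have "q0 \<in> {i. i < n}" using mem[of "[]"] by (simp add: q0_def)
  ultimately show ?thesis unfolding regular_def using cl
    by (intro exI[of _ "{i. i < n}"] exI[of _ q0] exI[of _ \<delta>] exI[of _ F]) (auto simp: F_def)
qed

lemma range2_sub: "range (\<lambda>w. h (f w) (g w)) \<subseteq> (\<lambda>(x,y). h x y) ` (range f \<times> range g)"
proof
  fix z assume "z \<in> range (\<lambda>w. h (f w) (g w))"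
  then obtain w where z: "z = h (f w) (g w)" by blast
  have "(f w, g w) \<in> range f \<times> range g" by simp
  moreover have "z = (\<lambda>(x,y). h x y) (f w, g w)" using z by simp
  ultimately show "z \<in> (\<lambda>(x,y). h x y) ` (range f \<times> range g)" by (rule rev_image_eqI)
qed

lemma fq_Un: assumes "fq A" "fq B" shows "fq (A \<union> B)"
proof -
  have "(\<lambda>w. Der w (A \<union> B)) = (\<lambda>w. Der w A \<union> Der w B)"
    by (rule ext) (simp add: Der_def Collect_disj_eq)
  then have "range (\<lambda>w. Der w (A \<union> B)) = range (\<lambda>w. Der w A \<union> Der w B)" by (rule arg_cong)
  also have "\<dots> \<subseteq> (\<lambda>(X,Y). X \<union> Y) ` (range (\<lambda>w. Der w A) \<times> range (\<lambda>w. Der w B))"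
    by (rule range2_sub)
  finally have sub: "range (\<lambda>w. Der w (A \<union> B)) \<subseteq> (\<lambda>(X,Y). X \<union> Y) ` (range (\<lambda>w. Der w A) \<times> range (\<lambda>w. Der w B))" .
  have "finite (range (\<lambda>w. Der w A) \<times> range (\<lambda>w. Der w B))" using assms by (simp add: fq_def)
  then show ?thesis unfolding fq_def by (rule finite_subset[OF sub finite_imageI])
qed

definition conc :: "'b list set \<Rightarrow> 'b list set \<Rightarrow> 'b list set" where
  "conc A B = {x @ y | x y. x \<in> A \<and> y \<in> B}"

lemma Der_conc: "Der w (conc A B) = conc (Der w A) B \<union> \<Union>{Der w2 B | w1 w2. w = w1 @ w2 \<and> w1 \<in> A}"
proof (intro equalityI subsetI)
  fix v assume "v \<in> Der w (conc A B)"
  then obtain x y where xy: "w @ v = x @ y" "x \<in> A" "y \<in> B" by (auto simp: Der_def conc_def)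
  from xy(1) obtain us where "w = x @ us \<and> us @ v = y \<or> w @ us = x \<and> v = us @ y"
    by (auto simp: append_eq_append_conv2)
  then show "v \<in> conc (Der w A) B \<union> \<Union>{Der w2 B | w1 w2. w = w1 @ w2 \<and> w1 \<in> A}"
  proof
    assume h: "w = x @ us \<and> us @ v = y"
    then have "v \<in> Der us B" using xy by (simp add: Der_def)
    moreover have "Der us B \<in> {Der w2 B | w1 w2. w = w1 @ w2 \<and> w1 \<in> A}" using h xy by blast
    ultimately show ?thesis by blast
  next
    assume h: "w @ us = x \<and> v = us @ y"
    then have "us \<in> Der w A" using xy by (simp add: Der_def)
    then have "v \<in> conc (Der w A) B" using h xy by (auto simp: conc_def)
    then show ?thesis by blast
  qed
next
  fix v assume "v \<in> conc (Der w A) B \<union> \<Union>{Der w2 B | w1 w2. w = w1 @ w2 \<and> w1 \<in> A}"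
  then show "v \<in> Der w (conc A B)"
  proof
    assume "v \<in> conc (Der w A) B"
    then obtain x y where "v = x @ y" "w @ x \<in> A" "y \<in> B" by (auto simp: conc_def Der_def)
    then show ?thesis unfolding Der_def conc_def by (intro CollectI exI[of _ "w @ x"] exI[of _ y]) simp
  next
    assume "v \<in> \<Union>{Der w2 B | w1 w2. w = w1 @ w2 \<and> w1 \<in> A}"
    then obtain w1 w2 where "w = w1 @ w2" "w1 \<in> A" "w2 @ v \<in> B" by (auto simp: Der_def)
    then show ?thesis unfolding Der_def conc_def by (intro CollectI exI[of _ w1] exI[of _ "w2 @ v"]) simp
  qed
qed

lemma fq_conc: assumes "fq A" "fq B" shows "fq (conc A B)"
proof -
  let ?DA = "range (\<lambda>w. Der w A)" and ?DB = "range (\<lambda>w. Der w B)"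
  have "range (\<lambda>w. Der w (conc A B)) \<subseteq> (\<lambda>(X,Y). conc X B \<union> \<Union>Y) ` (?DA \<times> Pow ?DB)"
  proof
    fix S assume "S \<in> range (\<lambda>w. Der w (conc A B))"
    then obtain w where S: "S = Der w (conc A B)" by blast
    show "S \<in> (\<lambda>(X,Y). conc X B \<union> \<Union>Y) ` (?DA \<times> Pow ?DB)"
      unfolding S Der_conc
    proof (rule image_eqI[of _ _ "(Der w A, {Der w2 B | w1 w2. w = w1 @ w2 \<and> w1 \<in> A})"])
      show "conc (Der w A) B \<union> \<Union> {Der w2 B |w1 w2. w = w1 @ w2 \<and> w1 \<in> A} =
        (\<lambda>(X, Y). conc X B \<union> \<Union> Y) (Der w A, {Der w2 B |w1 w2. w = w1 @ w2 \<and> w1 \<in> A})" by simp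
      have "{Der w2 B |w1 w2. w = w1 @ w2 \<and> w1 \<in> A} \<subseteq> ?DB"
      proof
        fix X assume "X \<in> {Der w2 B |w1 w2. w = w1 @ w2 \<and> w1 \<in> A}"
        then obtain w2 where "X = Der w2 B" by blast
        then show "X \<in> ?DB" by simp
      qed
      then show "(Der w A, {Der w2 B |w1 w2. w = w1 @ w2 \<and> w1 \<in> A}) \<in> ?DA \<times> Pow ?DB" by simp
    qed
  qed
  note sub = this
  have "finite (?DA \<times> Pow ?DB)" using assms by (simp add: fq_def)
  then show ?thesis unfolding fq_def by (rule finite_subset[OF sub finite_imageI])
qed

lemma fq_Nil: "fq {[]}"
proof -
  have "range (\<lambda>w. Der w {[]}) \<subseteq> {{[]}, {}}" by (auto simp: Der_def)
  then show ?thesis unfolding fq_def by (rule finite_subset) auto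
qed

lemma Der_single: "Der w {[c]} = (if w = [] then {[c]} else if w = [c] then {[]} else {})"
proof (cases w)
  case Nil then show ?thesis by simp
next
  case (Cons a w')
  then show ?thesis by (cases w') (auto simp: Der_def)
qed

lemma fq_single: "fq {[c]}"
proof -
  have "range (\<lambda>w. Der w {[c]}) \<subseteq> {{[c]}, {[]}, {}}" unfolding Der_single by auto
  then show ?thesis unfolding fq_def by (rule finite_subset) auto
qed

lemma fq_Rep: "fq {w. \<exists>n. w = replicate n c}"
proof -
  let ?R = "{w. \<exists>n. w = replicate n c}"
  have "range (\<lambda>w. Der w ?R) \<subseteq> {?R, {}}"
  proof
    fix S assume "S \<in> range (\<lambda>w. Der w ?R)"
    then obtain w where S: "S = Der w ?R" by blast
    show "S \<in> {?R, {}}"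
    proof (cases "\<forall>x\<in>set w. x = c")
      case True
      then have wrep: "w = replicate (length w) c" by (simp add: replicate_length_same)
      have "S = ?R" unfolding S Der_def
      proof (intro equalityI subsetI)
        fix v assume "v \<in> {v. w @ v \<in> ?R}"
        then obtain n where "w @ v = replicate n c" by blast
        then have "v = drop (length w) (replicate n c)" by (metis append_eq_conv_conj)
        then show "v \<in> ?R" by simp
      next
        fix v assume "v \<in> ?R"
        then obtain n where "v = replicate n c" by blast
        then have "w @ v = replicate (length w + n) c" by (subst wrep) (simp add: replicate_add)
        then show "v \<in> {v. w @ v \<in> ?R}" by blast
      qed
      then show ?thesis by simp
    next
      case False
      then have "S = {}" unfolding S Der_def
      proof (auto)
        fix v n assume "w @ v = replicate n c"
        then have "set (w @ v) \<subseteq> {c}" by (simp add: set_replicate_conv_if)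
        then show False using False by auto
      qed
      then show ?thesis by simp
    qed
  qed
  then show ?thesis unfolding fq_def by (rule finite_subset) auto
qed

lemma concI: "x \<in> A \<Longrightarrow> y \<in> B \<Longrightarrow> x @ y \<in> conc A B"
  unfolding conc_def by blast

lemma concE: "z \<in> conc A B \<Longrightarrow> (\<And>x y. z = x @ y \<Longrightarrow> x \<in> A \<Longrightarrow> y \<in> B \<Longrightarrow> P) \<Longrightarrow> P"
  unfolding conc_def by blast

lemma conc_eq: "{x. \<exists>n p. x = replicate n c @ G p} = conc {w. \<exists>n. w = replicate n c} {x. \<exists>p. x = G p}"
proof (intro equalityI subsetI)
  fix x assume "x \<in> {x. \<exists>n p. x = replicate n c @ G p}"
  then obtain n p where x: "x = replicate n c @ G p" by blast
  have "replicate n c \<in> {w. \<exists>n. w = replicate n c}" by blast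
  moreover have "G p \<in> {x. \<exists>p. x = G p}" by blast
  ultimately show "x \<in> conc {w. \<exists>n. w = replicate n c} {x. \<exists>p. x = G p}"
    unfolding x by (rule concI)
next
  fix x assume "x \<in> conc {w. \<exists>n. w = replicate n c} {x. \<exists>p. x = G p}"
  then obtain n p where "x = replicate n c @ G p" by (elim concE) blast
  then show "x \<in> {x. \<exists>n p. x = replicate n c @ G p}" by blast
qed

lemma fq_rep_gen: "fq {x. \<exists>p. x = G p} \<Longrightarrow> fq {x. \<exists>n p. x = replicate n c @ G p}"
  unfolding conc_eq by (rule fq_conc[OF fq_Rep])

lemma conc_eq2: "{x. \<exists>p. x = c # G p} = conc {[c]} {x. \<exists>p. x = G p}"
proof (intro equalityI subsetI)
  fix x assume "x \<in> {x. \<exists>p. x = c # G p}"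
  then obtain p where x: "x = [c] @ G p" by auto
  have "[c] \<in> {[c]}" by simp
  moreover have "G p \<in> {x. \<exists>p. x = G p}" by blast
  ultimately show "x \<in> conc {[c]} {x. \<exists>p. x = G p}"
    unfolding x by (rule concI)
next
  fix x assume "x \<in> conc {[c]} {x. \<exists>p. x = G p}"
  then obtain p where "x = [c] @ G p" by (elim concE) blast
  then show "x \<in> {x. \<exists>p. x = c # G p}" by auto
qed

lemma fq_cons_gen: "fq {x. \<exists>p. x = G p} \<Longrightarrow> fq {x. \<exists>p. x = c # G p}"
  unfolding conc_eq2 by (rule fq_conc[OF fq_single])

lemma fq_sh_nil: "fq {x. x = []}" using fq_Nil by simp

lemma fq_sh_rep0: "fq {x. \<exists>n. x = replicate n c}" by (rule fq_Rep)

lemma fq_sh_cons0: "fq {x. x = G} \<Longrightarrow> fq {x. x = c # G}"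
  using fq_cons_gen[of "\<lambda>_::unit. G" c] by simp

lemma fq_sh_rep00: "fq {x. x = G} \<Longrightarrow> fq {x. \<exists>n. x = replicate n c @ G}"
  using fq_rep_gen[of "\<lambda>_::unit. G" c] by simp

lemma fq_sh_cons1: "fq {x. \<exists>i. x = G i} \<Longrightarrow> fq {x. \<exists>i. x = c # G i}"
  by (rule fq_cons_gen)

lemma fq_sh_cons2: "fq {x. \<exists>i j. x = G i j} \<Longrightarrow> fq {x. \<exists>i j. x = c # G i j}"
  using fq_cons_gen[of "\<lambda>(i,j). G i j" c] by simp

lemma fq_sh_cons3: "fq {x. \<exists>i j k. x = G i j k} \<Longrightarrow> fq {x. \<exists>i j k. x = c # G i j k}"
  using fq_cons_gen[of "\<lambda>(i,j,k). G i j k" c] by simp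

lemma fq_sh_rep1: "fq {x. \<exists>i. x = G i} \<Longrightarrow> fq {x. \<exists>n i. x = replicate n c @ G i}"
  by (rule fq_rep_gen)

lemma fq_sh_rep2: "fq {x. \<exists>i j. x = G i j} \<Longrightarrow> fq {x. \<exists>n i j. x = replicate n c @ G i j}"
  using fq_rep_gen[of "\<lambda>(i,j). G i j" c] by simp

lemmas fq_sh = fq_sh_nil fq_sh_rep0 fq_sh_cons0 fq_sh_rep00 fq_sh_cons1 fq_sh_cons2 fq_sh_cons3
  fq_sh_rep1 fq_sh_rep2


definition w2 :: "nat \<Rightarrow> nat list" where "w2 n = replicate n 2"
definition w3 :: "nat \<Rightarrow> nat \<Rightarrow> nat \<Rightarrow> nat list" where
  "w3 i j k = replicate i 2 @ [1] @ replicate j 2 @ replicate k 1"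
definition tail2 :: "nat \<Rightarrow> nat list list" where
  "tail2 m = (if m = 0 then [] else [replicate m 2])"

lemma J_iff: "u \<in> J \<longleftrightarrow> (\<exists>n. u = w2 n) \<or> (\<exists>i j k. u = w3 i j k)"
  unfolding J_def w2_def w3_def by blast

lemma foldl_rep_Suc: "foldl f a (replicate (Suc n) x) = f (foldl f a (replicate n x)) x"
  by (induct n arbitrary: a) simp_all

lemma Rr_app: "Rr (u @ v) = foldl (\<lambda>T a. rinsert a T) (Rr u) v"
  by (simp add: Rr_def)

lemma ins2_tail2: "rinsert 2 (tail2 n) = tail2 (Suc n)"
  by (cases n) (simp_all add: tail2_def)

lemma ins1_tail2: "rinsert 1 (tail2 n) = [1 # replicate n 2]"
  by (cases n) (simp_all add: tail2_def)

lemma fold2_nil: "foldl (\<lambda>T a. rinsert a T) [] (replicate n 2) = tail2 n"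
proof (induct n)
  case 0 then show ?case by (simp add: tail2_def)
next
  case (Suc n) then show ?case by (simp only: foldl_rep_Suc ins2_tail2)
qed

lemma fold2_cons: "foldl (\<lambda>T a. rinsert a T) ((1 # c) # tail2 m) (replicate j 2) = (1 # c) # tail2 (m + j)"
proof (induct j)
  case 0 then show ?case by simp
next
  case (Suc j) then show ?case by (simp only: foldl_rep_Suc) (simp add: ins2_tail2)
qed

lemma fold1_cons: "foldl (\<lambda>T a. rinsert a T) ((1 # c) # rest) (replicate k 1) = (replicate k 1 @ 1 # c) # rest"
proof (induct k)
  case 0 then show ?case by simp
next
  case (Suc k) then show ?case by (simp only: foldl_rep_Suc) (cases k, simp_all)
qed

lemma fold2_single: "foldl (\<lambda>T a. rinsert a T) [1 # c] (replicate j 2) = (1 # c) # tail2 j"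
  using fold2_cons[of c 0 j] by (simp add: tail2_def)

lemma Rr_w2: "Rr (w2 n) = tail2 n"
  by (simp only: w2_def Rr_def fold2_nil)

lemma Rr_w3: "Rr (w3 i j k) = (replicate k 1 @ 1 # replicate i 2) # tail2 j"
  by (simp only: w3_def Rr_def foldl_append foldl_Cons foldl_Nil fold2_nil ins1_tail2 fold2_single fold1_cons)

lemma Rr_w3_2: "Rr (w3 i j k @ [2]) = Rr (w3 i (Suc j) k)"
proof -
  have "Rr (w3 i j k @ [2]) = rinsert 2 ((replicate k 1 @ 1 # replicate i 2) # tail2 j)"
    by (simp only: Rr_app Rr_w3 foldl_Cons foldl_Nil)
  also have "\<dots> = (replicate k 1 @ 1 # replicate i 2) # rinsert 2 (tail2 j)"
    by (cases k) simp_all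
  finally show ?thesis by (simp only: Rr_w3 ins2_tail2)
qed

lemma Rr_1_w3: "Rr ([1] @ w3 i j k) = Rr (w3 0 (i + j) (Suc k))"
proof -
  have "Rr ([1] @ w3 i j k) = foldl (\<lambda>T a. rinsert a T) (foldl (\<lambda>T a. rinsert a T)
      (rinsert 1 (foldl (\<lambda>T a. rinsert a T) [[1]] (replicate i 2))) (replicate j 2)) (replicate k 1)"
    by (simp only: w3_def Rr_def foldl_append foldl_Cons foldl_Nil rinsert.simps(1))
  also have "\<dots> = foldl (\<lambda>T a. rinsert a T) (foldl (\<lambda>T a. rinsert a T)
      (rinsert 1 ([1] # tail2 i)) (replicate j 2)) (replicate k 1)"
    by (simp only: fold2_single)
  also have "rinsert 1 ([1] # tail2 i) = [1, 1] # tail2 i" by simp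
  also have "foldl (\<lambda>T a. rinsert a T) ([1, 1] # tail2 i) (replicate j 2) = [1, 1] # tail2 (i + j)"
    by (rule fold2_cons)
  also have "foldl (\<lambda>T a. rinsert a T) ([1, 1] # tail2 (i + j)) (replicate k 1) = (replicate k 1 @ [1, 1]) # tail2 (i + j)"
    by (rule fold1_cons)
  also have "\<dots> = Rr (w3 0 (i + j) (Suc k))"
    by (simp only: Rr_w3) (simp add: replicate_app_Cons_same)
  finally show ?thesis .
qed

lemma rep_ne: "x \<noteq> y \<Longrightarrow> replicate n x \<noteq> replicate k y @ y # xs"
proof
  assume "x \<noteq> y" "replicate n x = replicate k y @ y # xs"
  then have "y \<in> set (replicate n x)" by simp
  then show False using \<open>x \<noteq> y\<close> by (simp add: set_replicate_conv_if split: if_splits)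
qed

lemma rep_ne': "x \<noteq> y \<Longrightarrow> replicate k y @ y # xs \<noteq> replicate n x"
  using rep_ne by metis

lemma rep12_inj: "replicate k (1::nat) @ 1 # replicate i 2 = replicate k' 1 @ 1 # replicate i' 2 \<Longrightarrow> k = k' \<and> i = i'"
proof (induct k arbitrary: k')
  case 0
  show ?case
  proof (cases k')
    case 0 then show ?thesis using "0.prems" by simp
  next
    case (Suc m)
    then have "replicate i (2::nat) = replicate m 1 @ 1 # replicate i' 2" using "0.prems" by simp
    then show ?thesis using rep_ne[of "2::nat" 1 i m "replicate i' 2"] by simp
  qed
next
  case (Suc k)
  show ?case
  proof (cases k')
    case 0
    then have "replicate i' (2::nat) = replicate k 1 @ 1 # replicate i 2" using Suc.prems by simp
    then show ?thesis using rep_ne[of "2::nat" 1 i' k "replicate i 2"] by simp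
  next
    case (Suc m)
    then have "replicate k (1::nat) @ 1 # replicate i 2 = replicate m 1 @ 1 # replicate i' 2"
      using Suc.prems by (simp only: replicate_Suc append_Cons list.inject simp_thms)
    from Suc.hyps[OF this] \<open>k' = Suc m\<close> show ?thesis by simp
  qed
qed

lemma tail2_inj: "tail2 a = tail2 b \<Longrightarrow> a = b"
  by (auto simp: tail2_def split: if_splits)

lemma J_inj: assumes "u \<in> J" "v \<in> J" "Rr u = Rr v" shows "u = v"
proof -
  have A: "Rr (w2 n) \<noteq> Rr (w3 i j k)" for n i j k
    by (simp add: Rr_w2 Rr_w3 tail2_def rep_ne)
  show ?thesis using assms unfolding J_iff
  proof (elim disjE exE)
    fix n m assume "u = w2 n" "v = w2 m" "Rr u = Rr v"
    then show "u = v" using tail2_inj[of n m] by (simp add: Rr_w2)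
  next
    fix n i j k assume "u = w2 n" "v = w3 i j k" "Rr u = Rr v"
    then show "u = v" using A by simp
  next
    fix n i j k assume "v = w2 n" "u = w3 i j k" "Rr u = Rr v"
    then show "u = v" using A by metis
  next
    fix i j k i' j' k' assume "u = w3 i j k" "v = w3 i' j' k'" "Rr u = Rr v"
    then have e: "(replicate k (1::nat) @ 1 # replicate i 2) # tail2 j = (replicate k' 1 @ 1 # replicate i' 2) # tail2 j'"
      using Rr_w3 by metis
    have e1: "replicate k (1::nat) @ 1 # replicate i 2 = replicate k' 1 @ 1 # replicate i' 2"
      by (rule e[THEN list.inject[THEN iffD1], THEN conjunct1])
    have e2: "tail2 j = tail2 j'"
      by (rule e[THEN list.inject[THEN iffD1], THEN conjunct2])
    from rep12_inj[OF e1] tail2_inj[OF e2] show "u = v" using \<open>u = w3 i j k\<close> \<open>v = w3 i' j' k'\<close> by simp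
  qed
qed

lemma w2_J: "w2 n \<in> J" unfolding J_iff by blast
lemma w3_J: "w3 i j k \<in> J" unfolding J_iff by blast

lemma rel_eq:
  assumes h1: "\<And>n. Rr (f (w2 n)) = Rr (g1 n)" and j1: "\<And>n. g1 n \<in> J"
    and h2: "\<And>i j k. Rr (f (w3 i j k)) = Rr (g2 i j k)" and j2: "\<And>i j k. g2 i j k \<in> J"
  shows "{(u,v). u \<in> J \<and> v \<in> J \<and> rps_eq (f u) v} =
    {(w2 n, g1 n) | n. True} \<union> {(w3 i j k, g2 i j k) | i j k. True}"
proof (intro equalityI subsetI)
  fix p assume "p \<in> {(u,v). u \<in> J \<and> v \<in> J \<and> rps_eq (f u) v}"
  then obtain u v where p: "p = (u,v)" and u: "u \<in> J" and v: "v \<in> J" and e: "Rr (f u) = Rr v"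
    by (auto simp: rps_eq_def)
  from u show "p \<in> {(w2 n, g1 n) | n. True} \<union> {(w3 i j k, g2 i j k) | i j k. True}"
    unfolding J_iff
  proof (elim disjE exE)
    fix n assume un: "u = w2 n"
    then have "g1 n = v" using J_inj[OF j1 v] e h1 by simp
    then show ?thesis using p un by blast
  next
    fix i j k assume un: "u = w3 i j k"
    then have "g2 i j k = v" using J_inj[OF j2 v] e h2 by simp
    then show ?thesis using p un by blast
  qed
next
  fix p assume "p \<in> {(w2 n, g1 n) | n. True} \<union> {(w3 i j k, g2 i j k) | i j k. True}"
  then show "p \<in> {(u,v). u \<in> J \<and> v \<in> J \<and> rps_eq (f u) v}"
  proof
    assume "p \<in> {(w2 n, g1 n) | n. True}"
    then obtain n where "p = (w2 n, g1 n)" by blast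
    then show ?thesis using h1[of n] j1[of n] w2_J[of n] by (simp add: rps_eq_def)
  next
    assume "p \<in> {(w3 i j k, g2 i j k) | i j k. True}"
    then obtain i j k where "p = (w3 i j k, g2 i j k)" by blast
    then show ?thesis using h2[of i j k] j2[of i j k] w3_J[of i j k] by (simp add: rps_eq_def)
  qed
qed

lemma img_eq:
  "(\<lambda>(u,v). d u v) ` ({(w2 n, g1 n) | n. True} \<union> {(w3 i j k, g2 i j k) | i j k. True}) =
    {w. \<exists>n. w = d (w2 n) (g1 n)} \<union> {w. \<exists>i j k. w = d (w3 i j k) (g2 i j k)}"
proof (intro equalityI subsetI)
  fix x assume "x \<in> (\<lambda>(u,v). d u v) ` ({(w2 n, g1 n) | n. True} \<union> {(w3 i j k, g2 i j k) | i j k. True})"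
  then obtain p where x: "x = (\<lambda>(u,v). d u v) p" and
    p: "p \<in> {(w2 n, g1 n) | n. True} \<union> {(w3 i j k, g2 i j k) | i j k. True}" by blast
  from p show "x \<in> {w. \<exists>n. w = d (w2 n) (g1 n)} \<union> {w. \<exists>i j k. w = d (w3 i j k) (g2 i j k)}"
  proof
    assume "p \<in> {(w2 n, g1 n) | n. True}"
    then obtain n where "p = (w2 n, g1 n)" by blast
    then have "x = d (w2 n) (g1 n)" using x by simp
    then show ?thesis by blast
  next
    assume "p \<in> {(w3 i j k, g2 i j k) | i j k. True}"
    then obtain i j k where "p = (w3 i j k, g2 i j k)" by blast
    then have "x = d (w3 i j k) (g2 i j k)" using x by simp
    then show ?thesis by blast
  qed
next
  fix x assume "x \<in> {w. \<exists>n. w = d (w2 n) (g1 n)} \<union> {w. \<exists>i j k. w = d (w3 i j k) (g2 i j k)}"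
  then show "x \<in> (\<lambda>(u,v). d u v) ` ({(w2 n, g1 n) | n. True} \<union> {(w3 i j k, g2 i j k) | i j k. True})"
  proof
    assume "x \<in> {w. \<exists>n. w = d (w2 n) (g1 n)}"
    then obtain n where x: "x = d (w2 n) (g1 n)" by blast
    have "(w2 n, g1 n) \<in> {(w2 n, g1 n) | n. True} \<union> {(w3 i j k, g2 i j k) | i j k. True}" by blast
    then show ?thesis unfolding x by (rule rev_image_eqI) simp
  next
    assume "x \<in> {w. \<exists>i j k. w = d (w3 i j k) (g2 i j k)}"
    then obtain i j k where x: "x = d (w3 i j k) (g2 i j k)" by blast
    have "(w3 i j k, g2 i j k) \<in> {(w2 n, g1 n) | n. True} \<union> {(w3 i j k, g2 i j k) | i j k. True}" by blast
    then show ?thesis unfolding x by (rule rev_image_eqI) simp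
  qed
qed

lemma reg_main:
  assumes "\<And>n. Rr (f (w2 n)) = Rr (g1 n)" "\<And>n. g1 n \<in> J"
    "\<And>i j k. Rr (f (w3 i j k)) = Rr (g2 i j k)" "\<And>i j k. g2 i j k \<in> J"
    "fq {w. \<exists>n. w = d (w2 n) (g1 n)}" "fq {w. \<exists>i j k. w = d (w3 i j k) (g2 i j k)}"
  shows "regular ((\<lambda>(u,v). d u v) ` {(u,v). u \<in> J \<and> v \<in> J \<and> rps_eq (f u) v})"
  unfolding rel_eq[of f g1 g2, OF assms(1-4)] img_eq
  by (rule fq_regular[OF fq_Un[OF assms(5,6)]])

lemma deltaR_I:
  assumes "map fst w = map Some u @ replicate (length v - length u) None"
    and "map snd w = map Some v @ replicate (length u - length v) None"
  shows "deltaR u v = w"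
proof -
  have "w = zip (map fst w) (map snd w)" by (simp add: zip_map_fst_snd)
  also have "\<dots> = zip (map Some u @ replicate (length v - length u) None) (map Some v @ replicate (length u - length v) None)"
    using assms by simp
  also have "\<dots> = deltaR u v" by (simp add: deltaR_def Let_def max_def)
  finally show ?thesis by simp
qed

lemma deltaL_I:
  assumes "map fst w = replicate (length v - length u) None @ map Some u"
    and "map snd w = replicate (length u - length v) None @ map Some v"
  shows "deltaL u v = w"
proof -
  have "w = zip (map fst w) (map snd w)" by (simp add: zip_map_fst_snd)
  also have "\<dots> = zip (replicate (length v - length u) None @ map Some u) (replicate (length u - length v) None @ map Some v)"
    using assms by simp
  also have "\<dots> = deltaL u v" by (simp add: deltaL_def Let_def max_def)
  finally show ?thesis by simp
qed

lemmas cs = w2_def w3_def replicate_app_Cons_same replicate_append_same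

lemma cR_E1: "deltaR (w2 n) (w2 n) = replicate n (Some 2, Some 2)"
  by (rule deltaR_I) (simp_all add: cs replicate_add)

lemma cR_E2: "deltaR (w3 i j k) (w3 i j k) = replicate i (Some 2, Some 2) @ (Some 1, Some 1) # replicate j (Some 2, Some 2) @ replicate k (Some 1, Some 1)"
  by (rule deltaR_I) (simp_all add: cs replicate_add)

lemma cR_R2a: "deltaR (w2 n) (w2 (Suc n)) = replicate n (Some 2, Some 2) @ [(None, Some 2)]"
  by (rule deltaR_I) (simp_all add: cs replicate_add)

lemma cR_R2b0: "deltaR (w3 i j 0) (w3 i (Suc j) 0) = replicate i (Some 2, Some 2) @ (Some 1, Some 1) # replicate j (Some 2, Some 2) @ [(None, Some 2)]"
  by (rule deltaR_I) (simp_all add: cs replicate_add)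

lemma cR_R2bS: "deltaR (w3 i j (Suc k)) (w3 i (Suc j) (Suc k)) = replicate i (Some 2, Some 2) @ (Some 1, Some 1) # replicate j (Some 2, Some 2) @ (Some 1, Some 2) # replicate k (Some 1, Some 1) @ [(None, Some 1)]"
  by (rule deltaR_I) (simp_all add: cs replicate_add)

lemma cR_R1a: "deltaR (w2 n) (w3 n 0 0) = replicate n (Some 2, Some 2) @ [(None, Some 1)]"
  by (rule deltaR_I) (simp_all add: cs replicate_add)

lemma cR_R1b: "deltaR (w3 i j k) (w3 i j (Suc k)) = replicate i (Some 2, Some 2) @ (Some 1, Some 1) # replicate j (Some 2, Some 2) @ replicate k (Some 1, Some 1) @ [(None, Some 1)]"
  by (rule deltaR_I) (simp_all add: cs replicate_add)

lemma cR_L2b00: "deltaR (w3 i 0 0) (w3 (Suc i) 0 0) = replicate i (Some 2, Some 2) @ [(Some 1, Some 2), (None, Some 1)]"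
  by (rule deltaR_I) (simp_all add: cs replicate_add)

lemma cR_L2b0S: "deltaR (w3 i 0 (Suc k)) (w3 (Suc i) 0 (Suc k)) = replicate i (Some 2, Some 2) @ (Some 1, Some 2) # (Some 1, Some 1) # replicate k (Some 1, Some 1) @ [(None, Some 1)]"
  by (rule deltaR_I) (simp_all add: cs replicate_add)

lemma cR_L2bS0: "deltaR (w3 i (Suc j) 0) (w3 (Suc i) (Suc j) 0) = replicate i (Some 2, Some 2) @ (Some 1, Some 2) # (Some 2, Some 1) # replicate j (Some 2, Some 2) @ [(None, Some 2)]"
  by (rule deltaR_I) (simp_all add: cs replicate_add)

lemma cR_L2bSS: "deltaR (w3 i (Suc j) (Suc k)) (w3 (Suc i) (Suc j) (Suc k)) = replicate i (Some 2, Some 2) @ (Some 1, Some 2) # (Some 2, Some 1) # replicate j (Some 2, Some 2) @ (Some 1, Some 2) # replicate k (Some 1, Some 1) @ [(None, Some 1)]"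
  by (rule deltaR_I) (simp_all add: cs replicate_add)

lemma cR_L1a0: "deltaR (w2 0) (w3 0 0 0) = [(None, Some 1)]"
  by (rule deltaR_I) (simp_all add: cs replicate_add)

lemma cR_L1aS: "deltaR (w2 (Suc n)) (w3 0 (Suc n) 0) = (Some 2, Some 1) # replicate n (Some 2, Some 2) @ [(None, Some 2)]"
  by (rule deltaR_I) (simp_all add: cs replicate_add)

lemma cR_L1b0: "deltaR (w3 0 j k) (w3 0 (0 + j) (Suc k)) = (Some 1, Some 1) # replicate j (Some 2, Some 2) @ replicate k (Some 1, Some 1) @ [(None, Some 1)]"
  by (rule deltaR_I) (simp_all add: cs replicate_add)

lemma cR_L1bS: "deltaR (w3 (Suc i) j k) (w3 0 (Suc i + j) (Suc k)) = (Some 2, Some 1) # replicate i (Some 2, Some 2) @ (Some 1, Some 2) # replicate j (Some 2, Some 2) @ replicate k (Some 1, Some 1) @ [(None, Some 1)]"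
  by (rule deltaR_I) (simp_all add: cs replicate_add)

lemma cL_E1: "deltaL (w2 n) (w2 n) = replicate n (Some 2, Some 2)"
  by (rule deltaL_I) (simp_all add: cs replicate_add)

lemma cL_E2: "deltaL (w3 i j k) (w3 i j k) = replicate i (Some 2, Some 2) @ (Some 1, Some 1) # replicate j (Some 2, Some 2) @ replicate k (Some 1, Some 1)"
  by (rule deltaL_I) (simp_all add: cs replicate_add)

lemma cL_R2a: "deltaL (w2 n) (w2 (Suc n)) = (None, Some 2) # replicate n (Some 2, Some 2)"
  by (rule deltaL_I) (simp_all add: cs replicate_add)

lemma cL_R2b0: "deltaL (w3 0 j k) (w3 0 (Suc j) k) = (None, Some 1) # (Some 1, Some 2) # replicate j (Some 2, Some 2) @ replicate k (Some 1, Some 1)"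
  by (rule deltaL_I) (simp_all add: cs replicate_add)

lemma cL_R2bS: "deltaL (w3 (Suc i) j k) (w3 (Suc i) (Suc j) k) = (None, Some 2) # replicate i (Some 2, Some 2) @ (Some 2, Some 1) # (Some 1, Some 2) # replicate j (Some 2, Some 2) @ replicate k (Some 1, Some 1)"
  by (rule deltaL_I) (simp_all add: cs replicate_add)

lemma cL_R1a0: "deltaL (w2 0) (w3 0 0 0) = [(None, Some 1)]"
  by (rule deltaL_I) (simp_all add: cs replicate_add)

lemma cL_R1aS: "deltaL (w2 (Suc n)) (w3 (Suc n) 0 0) = (None, Some 2) # replicate n (Some 2, Some 2) @ [(Some 2, Some 1)]"
  by (rule deltaL_I) (simp_all add: cs replicate_add)

lemma cL_R1b00: "deltaL (w3 0 0 k) (w3 0 0 (Suc k)) = (None, Some 1) # (Some 1, Some 1) # replicate k (Some 1, Some 1)"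
  by (rule deltaL_I) (simp_all add: cs replicate_add)

lemma cL_R1b0S: "deltaL (w3 0 (Suc j) k) (w3 0 (Suc j) (Suc k)) = (None, Some 1) # (Some 1, Some 2) # replicate j (Some 2, Some 2) @ (Some 2, Some 1) # replicate k (Some 1, Some 1)"
  by (rule deltaL_I) (simp_all add: cs replicate_add)

lemma cL_R1bS0: "deltaL (w3 (Suc i) 0 k) (w3 (Suc i) 0 (Suc k)) = (None, Some 2) # replicate i (Some 2, Some 2) @ (Some 2, Some 1) # (Some 1, Some 1) # replicate k (Some 1, Some 1)"
  by (rule deltaL_I) (simp_all add: cs replicate_add)

lemma cL_R1bSS: "deltaL (w3 (Suc i) (Suc j) k) (w3 (Suc i) (Suc j) (Suc k)) = (None, Some 2) # replicate i (Some 2, Some 2) @ (Some 2, Some 1) # (Some 1, Some 2) # replicate j (Some 2, Some 2) @ (Some 2, Some 1) # replicate k (Some 1, Some 1)"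
  by (rule deltaL_I) (simp_all add: cs replicate_add)

lemma cL_L2b: "deltaL (w3 i j k) (w3 (Suc i) j k) = (None, Some 2) # replicate i (Some 2, Some 2) @ (Some 1, Some 1) # replicate j (Some 2, Some 2) @ replicate k (Some 1, Some 1)"
  by (rule deltaL_I) (simp_all add: cs replicate_add)

lemma cL_L1a: "deltaL (w2 n) (w3 0 n 0) = (None, Some 1) # replicate n (Some 2, Some 2)"
  by (rule deltaL_I) (simp_all add: cs replicate_add)

lemma cL_L1b0: "deltaL (w3 i 0 k) (w3 0 (i + 0) (Suc k)) = (None, Some 1) # replicate i (Some 2, Some 2) @ (Some 1, Some 1) # replicate k (Some 1, Some 1)"
  by (rule deltaL_I) (simp_all add: cs replicate_add)

lemma cL_L1bS: "deltaL (w3 i (Suc j) k) (w3 0 (i + Suc j) (Suc k)) = (None, Some 1) # replicate i (Some 2, Some 2) @ (Some 1, Some 2) # replicate j (Some 2, Some 2) @ (Some 2, Some 1) # replicate k (Some 1, Some 1)"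
  by (rule deltaL_I) (simp_all add: cs replicate_add)

lemma fq_split1:
  assumes "fq {w. w = F 0}" "fq {w. \<exists>n. w = F (Suc n)}" shows "fq {w. \<exists>n. w = F n}"
proof -
  have "{w. \<exists>n. w = F n} = {w. w = F 0} \<union> {w. \<exists>n. w = F (Suc n)}"
  proof (intro equalityI subsetI)
    fix w assume "w \<in> {w. \<exists>n. w = F n}"
    then obtain n where w: "w = F n" by blast
    show "w \<in> {w. w = F 0} \<union> {w. \<exists>n. w = F (Suc n)}"
    proof (cases n)
      case 0 then show ?thesis using w by blast
    next
      case (Suc m) then show ?thesis using w by blast
    qed
  qed blast
  then show ?thesis using fq_Un[OF assms] by simp
qed

lemma fq_split2a:
  assumes "fq {w. \<exists>k. w = F 0 k}" "fq {w. \<exists>j k. w = F (Suc j) k}" shows "fq {w. \<exists>j k. w = F j k}"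
proof -
  have "{w. \<exists>j k. w = F j k} = {w. \<exists>k. w = F 0 k} \<union> {w. \<exists>j k. w = F (Suc j) k}"
  proof (intro equalityI subsetI)
    fix w assume "w \<in> {w. \<exists>j k. w = F j k}"
    then obtain j k where w: "w = F j k" by blast
    show "w \<in> {w. \<exists>k. w = F 0 k} \<union> {w. \<exists>j k. w = F (Suc j) k}"
    proof (cases j)
      case 0 then show ?thesis using w by blast
    next
      case (Suc m) then show ?thesis using w by blast
    qed
  qed blast
  then show ?thesis using fq_Un[OF assms] by simp
qed

lemma fq_split2b:
  assumes "fq {w. \<exists>i. w = F i 0}" "fq {w. \<exists>i k. w = F i (Suc k)}" shows "fq {w. \<exists>i k. w = F i k}"
proof -
  have "{w. \<exists>i k. w = F i k} = {w. \<exists>i. w = F i 0} \<union> {w. \<exists>i k. w = F i (Suc k)}"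
  proof (intro equalityI subsetI)
    fix w assume "w \<in> {w. \<exists>i k. w = F i k}"
    then obtain i k where w: "w = F i k" by blast
    show "w \<in> {w. \<exists>i. w = F i 0} \<union> {w. \<exists>i k. w = F i (Suc k)}"
    proof (cases k)
      case 0 then show ?thesis using w by blast
    next
      case (Suc m) then show ?thesis using w by blast
    qed
  qed blast
  then show ?thesis using fq_Un[OF assms] by simp
qed

lemma fq_split3i:
  assumes "fq {w. \<exists>j k. w = F 0 j k}" "fq {w. \<exists>i j k. w = F (Suc i) j k}" shows "fq {w. \<exists>i j k. w = F i j k}"
proof -
  have "{w. \<exists>i j k. w = F i j k} = {w. \<exists>j k. w = F 0 j k} \<union> {w. \<exists>i j k. w = F (Suc i) j k}"
  proof (intro equalityI subsetI)
    fix w assume "w \<in> {w. \<exists>i j k. w = F i j k}"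
    then obtain i j k where w: "w = F i j k" by blast
    show "w \<in> {w. \<exists>j k. w = F 0 j k} \<union> {w. \<exists>i j k. w = F (Suc i) j k}"
    proof (cases i)
      case 0 then show ?thesis using w by blast
    next
      case (Suc m) then show ?thesis using w by blast
    qed
  qed blast
  then show ?thesis using fq_Un[OF assms] by simp
qed

lemma fq_split3j:
  assumes "fq {w. \<exists>i k. w = F i 0 k}" "fq {w. \<exists>i j k. w = F i (Suc j) k}" shows "fq {w. \<exists>i j k. w = F i j k}"
proof -
  have "{w. \<exists>i j k. w = F i j k} = {w. \<exists>i k. w = F i 0 k} \<union> {w. \<exists>i j k. w = F i (Suc j) k}"
  proof (intro equalityI subsetI)
    fix w assume "w \<in> {w. \<exists>i j k. w = F i j k}"
    then obtain i j k where w: "w = F i j k" by blast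
    show "w \<in> {w. \<exists>i k. w = F i 0 k} \<union> {w. \<exists>i j k. w = F i (Suc j) k}"
    proof (cases j)
      case 0 then show ?thesis using w by blast
    next
      case (Suc m) then show ?thesis using w by blast
    qed
  qed blast
  then show ?thesis using fq_Un[OF assms] by simp
qed

lemma fq_split3k:
  assumes "fq {w. \<exists>i j. w = F i j 0}" "fq {w. \<exists>i j k. w = F i j (Suc k)}" shows "fq {w. \<exists>i j k. w = F i j k}"
proof -
  have "{w. \<exists>i j k. w = F i j k} = {w. \<exists>i j. w = F i j 0} \<union> {w. \<exists>i j k. w = F i j (Suc k)}"
  proof (intro equalityI subsetI)
    fix w assume "w \<in> {w. \<exists>i j k. w = F i j k}"
    then obtain i j k where w: "w = F i j k" by blast
    show "w \<in> {w. \<exists>i j. w = F i j 0} \<union> {w. \<exists>i j k. w = F i j (Suc k)}"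
    proof (cases k)
      case 0 then show ?thesis using w by blast
    next
      case (Suc m) then show ?thesis using w by blast
    qed
  qed blast
  then show ?thesis using fq_Un[OF assms] by simp
qed

lemma fR_E1: "fq {w. \<exists>n. w = deltaR (w2 n) (w2 n)}"
  by (simp only: cR_E1) (rule fq_sh)+
lemma fR_E2: "fq {w. \<exists>i j k. w = deltaR (w3 i j k) (w3 i j k)}"
  by (simp only: cR_E2) (rule fq_sh)+
lemma fR_R2a: "fq {w. \<exists>n. w = deltaR (w2 n) (w2 (Suc n))}"
  by (simp only: cR_R2a) (rule fq_sh)+
lemma fR_R2b: "fq {w. \<exists>i j k. w = deltaR (w3 i j k) (w3 i (Suc j) k)}"
  apply (rule fq_split3k)
  subgoal by (simp only: cR_R2b0) (rule fq_sh)+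
  subgoal by (simp only: cR_R2bS) (rule fq_sh)+
  done
lemma fR_R1a: "fq {w. \<exists>n. w = deltaR (w2 n) (w3 n 0 0)}"
  by (simp only: cR_R1a) (rule fq_sh)+
lemma fR_R1b: "fq {w. \<exists>i j k. w = deltaR (w3 i j k) (w3 i j (Suc k))}"
  by (simp only: cR_R1b) (rule fq_sh)+
lemma fR_L2b: "fq {w. \<exists>i j k. w = deltaR (w3 i j k) (w3 (Suc i) j k)}"
  apply (rule fq_split3j)
  subgoal
    apply (rule fq_split2b)
    subgoal by (simp only: cR_L2b00) (rule fq_sh)+
    subgoal by (simp only: cR_L2b0S) (rule fq_sh)+
    done
  subgoal
    apply (rule fq_split3k)
    subgoal by (simp only: cR_L2bS0) (rule fq_sh)+
    subgoal by (simp only: cR_L2bSS) (rule fq_sh)+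
    done
  done
lemma fR_L1a: "fq {w. \<exists>n. w = deltaR (w2 n) (w3 0 n 0)}"
  apply (rule fq_split1)
  subgoal by (simp only: cR_L1a0) (rule fq_sh)+
  subgoal by (simp only: cR_L1aS) (rule fq_sh)+
  done
lemma fR_L1b: "fq {w. \<exists>i j k. w = deltaR (w3 i j k) (w3 0 (i + j) (Suc k))}"
  apply (rule fq_split3i)
  subgoal by (simp only: cR_L1b0) (rule fq_sh)+
  subgoal by (simp only: cR_L1bS) (rule fq_sh)+
  done

lemma fL_E1: "fq {w. \<exists>n. w = deltaL (w2 n) (w2 n)}"
  by (simp only: cL_E1) (rule fq_sh)+
lemma fL_E2: "fq {w. \<exists>i j k. w = deltaL (w3 i j k) (w3 i j k)}"
  by (simp only: cL_E2) (rule fq_sh)+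
lemma fL_R2a: "fq {w. \<exists>n. w = deltaL (w2 n) (w2 (Suc n))}"
  by (simp only: cL_R2a) (rule fq_sh)+
lemma fL_R2b: "fq {w. \<exists>i j k. w = deltaL (w3 i j k) (w3 i (Suc j) k)}"
  apply (rule fq_split3i)
  subgoal by (simp only: cL_R2b0) (rule fq_sh)+
  subgoal by (simp only: cL_R2bS) (rule fq_sh)+
  done
lemma fL_R1a: "fq {w. \<exists>n. w = deltaL (w2 n) (w3 n 0 0)}"
  apply (rule fq_split1)
  subgoal by (simp only: cL_R1a0) (rule fq_sh)+
  subgoal by (simp only: cL_R1aS) (rule fq_sh)+
  done
lemma fL_R1b: "fq {w. \<exists>i j k. w = deltaL (w3 i j k) (w3 i j (Suc k))}"
  apply (rule fq_split3i)
  subgoal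
    apply (rule fq_split2a)
    subgoal by (simp only: cL_R1b00) (rule fq_sh)+
    subgoal by (simp only: cL_R1b0S) (rule fq_sh)+
    done
  subgoal
    apply (rule fq_split3j)
    subgoal by (simp only: cL_R1bS0) (rule fq_sh)+
    subgoal by (simp only: cL_R1bSS) (rule fq_sh)+
    done
  done
lemma fL_L2b: "fq {w. \<exists>i j k. w = deltaL (w3 i j k) (w3 (Suc i) j k)}"
  by (simp only: cL_L2b) (rule fq_sh)+
lemma fL_L1a: "fq {w. \<exists>n. w = deltaL (w2 n) (w3 0 n 0)}"
  by (simp only: cL_L1a) (rule fq_sh)+
lemma fL_L1b: "fq {w. \<exists>i j k. w = deltaL (w3 i j k) (w3 0 (i + j) (Suc k))}"
  apply (rule fq_split3j)
  subgoal by (simp only: cL_L1b0) (rule fq_sh)+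
  subgoal by (simp only: cL_L1bS) (rule fq_sh)+
  done

lemma hE1: "Rr (w2 n @ []) = Rr (w2 n)" by simp
lemma hE2: "Rr (w3 i j k @ []) = Rr (w3 i j k)" by simp
lemma hE1': "Rr ([] @ w2 n) = Rr (w2 n)" by simp
lemma hE2': "Rr ([] @ w3 i j k) = Rr (w3 i j k)" by simp
lemma hR2a: "Rr (w2 n @ [2]) = Rr (w2 (Suc n))"
  by (simp only: w2_def replicate_append_same replicate_Suc)
lemma hR1a: "Rr (w2 n @ [1]) = Rr (w3 n 0 0)"
  by (simp add: w2_def w3_def)
lemma hR1b: "Rr (w3 i j k @ [1]) = Rr (w3 i j (Suc k))"
  by (simp only: w3_def append_assoc replicate_append_same replicate_Suc)
lemma hL2a: "Rr ([2] @ w2 n) = Rr (w2 (Suc n))"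
  by (simp add: w2_def)
lemma hL2b: "Rr ([2] @ w3 i j k) = Rr (w3 (Suc i) j k)"
  by (simp add: w3_def)
lemma hL1a: "Rr ([1] @ w2 n) = Rr (w3 0 n 0)"
  by (simp add: w2_def w3_def)

lemma rR_E: "regular ((\<lambda>(u,v). deltaR u v) ` {(u,v). u \<in> J \<and> v \<in> J \<and> rps_eq (u @ []) v})"
  by (rule reg_main[of "\<lambda>u. u @ []" "\<lambda>n. w2 n" "\<lambda>i j k. w3 i j k" deltaR,
      OF hE1 w2_J hE2 w3_J fR_E1 fR_E2])
lemma rR_E': "regular ((\<lambda>(u,v). deltaR u v) ` {(u,v). u \<in> J \<and> v \<in> J \<and> rps_eq ([] @ u) v})"
  by (rule reg_main[of "\<lambda>u. [] @ u" "\<lambda>n. w2 n" "\<lambda>i j k. w3 i j k" deltaR,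
      OF hE1' w2_J hE2' w3_J fR_E1 fR_E2])
lemma rL_E: "regular ((\<lambda>(u,v). deltaL u v) ` {(u,v). u \<in> J \<and> v \<in> J \<and> rps_eq (u @ []) v})"
  by (rule reg_main[of "\<lambda>u. u @ []" "\<lambda>n. w2 n" "\<lambda>i j k. w3 i j k" deltaL,
      OF hE1 w2_J hE2 w3_J fL_E1 fL_E2])
lemma rL_E': "regular ((\<lambda>(u,v). deltaL u v) ` {(u,v). u \<in> J \<and> v \<in> J \<and> rps_eq ([] @ u) v})"
  by (rule reg_main[of "\<lambda>u. [] @ u" "\<lambda>n. w2 n" "\<lambda>i j k. w3 i j k" deltaL,
      OF hE1' w2_J hE2' w3_J fL_E1 fL_E2])

lemma rR_R2: "regular ((\<lambda>(u,v). deltaR u v) ` {(u,v). u \<in> J \<and> v \<in> J \<and> rps_eq (u @ [2]) v})"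
  by (rule reg_main[of "\<lambda>u. u @ [2]" "\<lambda>n. w2 (Suc n)" "\<lambda>i j k. w3 i (Suc j) k" deltaR,
      OF hR2a w2_J Rr_w3_2 w3_J fR_R2a fR_R2b])
lemma rL_R2: "regular ((\<lambda>(u,v). deltaL u v) ` {(u,v). u \<in> J \<and> v \<in> J \<and> rps_eq (u @ [2]) v})"
  by (rule reg_main[of "\<lambda>u. u @ [2]" "\<lambda>n. w2 (Suc n)" "\<lambda>i j k. w3 i (Suc j) k" deltaL,
      OF hR2a w2_J Rr_w3_2 w3_J fL_R2a fL_R2b])
lemma rR_R1: "regular ((\<lambda>(u,v). deltaR u v) ` {(u,v). u \<in> J \<and> v \<in> J \<and> rps_eq (u @ [1]) v})"
  by (rule reg_main[of "\<lambda>u. u @ [1]" "\<lambda>n. w3 n 0 0" "\<lambda>i j k. w3 i j (Suc k)" deltaR,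
      OF hR1a w3_J hR1b w3_J fR_R1a fR_R1b])
lemma rL_R1: "regular ((\<lambda>(u,v). deltaL u v) ` {(u,v). u \<in> J \<and> v \<in> J \<and> rps_eq (u @ [1]) v})"
  by (rule reg_main[of "\<lambda>u. u @ [1]" "\<lambda>n. w3 n 0 0" "\<lambda>i j k. w3 i j (Suc k)" deltaL,
      OF hR1a w3_J hR1b w3_J fL_R1a fL_R1b])
lemma rR_L2: "regular ((\<lambda>(u,v). deltaR u v) ` {(u,v). u \<in> J \<and> v \<in> J \<and> rps_eq ([2] @ u) v})"
  by (rule reg_main[of "\<lambda>u. [2] @ u" "\<lambda>n. w2 (Suc n)" "\<lambda>i j k. w3 (Suc i) j k" deltaR,
      OF hL2a w2_J hL2b w3_J fR_R2a fR_L2b])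
lemma rL_L2: "regular ((\<lambda>(u,v). deltaL u v) ` {(u,v). u \<in> J \<and> v \<in> J \<and> rps_eq ([2] @ u) v})"
  by (rule reg_main[of "\<lambda>u. [2] @ u" "\<lambda>n. w2 (Suc n)" "\<lambda>i j k. w3 (Suc i) j k" deltaL,
      OF hL2a w2_J hL2b w3_J fL_R2a fL_L2b])
lemma rR_L1: "regular ((\<lambda>(u,v). deltaR u v) ` {(u,v). u \<in> J \<and> v \<in> J \<and> rps_eq ([1] @ u) v})"
  by (rule reg_main[of "\<lambda>u. [1] @ u" "\<lambda>n. w3 0 n 0" "\<lambda>i j k. w3 0 (i + j) (Suc k)" deltaR,
      OF hL1a w3_J Rr_1_w3 w3_J fR_L1a fR_L1b])
lemma rL_L1: "regular ((\<lambda>(u,v). deltaL u v) ` {(u,v). u \<in> J \<and> v \<in> J \<and> rps_eq ([1] @ u) v})"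
  by (rule reg_main[of "\<lambda>u. [1] @ u" "\<lambda>n. w3 0 n 0" "\<lambda>i j k. w3 0 (i + j) (Suc k)" deltaL,
      OF hL1a w3_J Rr_1_w3 w3_J fL_L1a fL_L1b])

lemma right_mult: assumes "u \<in> J" "x = 1 \<or> x = 2" shows "\<exists>v\<in>J. Rr (u @ [x]) = Rr v"
  using assms(1) unfolding J_iff
proof (elim disjE exE)
  fix n assume u: "u = w2 n"
  from assms(2) show ?thesis
  proof
    assume "x = 1" then show ?thesis using u hR1a w3_J by blast
  next
    assume "x = 2" then show ?thesis using u hR2a w2_J by blast
  qed
next
  fix i j k assume u: "u = w3 i j k"
  from assms(2) show ?thesis
  proof
    assume "x = 1" then show ?thesis using u hR1b w3_J by blast
  next
    assume "x = 2" then show ?thesis using u Rr_w3_2 w3_J by blast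
  qed
qed

lemma nf_exists: "w \<in> lists A2 \<Longrightarrow> \<exists>u\<in>J. Rr u = Rr w"
proof (induction w rule: rev_induct)
  case Nil
  have "w2 0 \<in> J" by (rule w2_J)
  moreover have "Rr (w2 0) = Rr []" by (simp add: w2_def)
  ultimately show ?case by blast
next
  case (snoc x w)
  then have x: "x = 1 \<or> x = 2" and w: "w \<in> lists A2" by (auto simp: A2_def)
  from snoc.IH[OF w] obtain u where u: "u \<in> J" "Rr u = Rr w" by blast
  have "Rr (w @ [x]) = rinsert x (Rr w)" by (simp add: Rr_app)
  also have "\<dots> = Rr (u @ [x])" using u(2) by (simp add: Rr_app)
  finally have e: "Rr (w @ [x]) = Rr (u @ [x])" .
  from right_mult[OF u(1) x] obtain v where "v \<in> J" "Rr (u @ [x]) = Rr v" by blast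
  then show ?case using e by metis
qed

lemma rep_lists: "x \<in> A \<Longrightarrow> replicate n x \<in> lists A"
  by (induct n) simp_all

lemma J_eq: "J = {w. \<exists>i j k. w = replicate i 2 @ 1 # replicate j 2 @ replicate k 1} \<union> {w. \<exists>n. w = replicate n 2}"
  by (simp add: J_def)

theorem proposition6p5:
  shows "biautomatic A2 rps_eq J"
  unfolding biautomatic_def
proof (intro conjI)
  show "finite A2" by (simp add: A2_def)
  show "J \<subseteq> lists A2"
  proof
    fix u assume "u \<in> J"
    then show "u \<in> lists A2" unfolding J_iff
      by (elim disjE exE) (simp_all add: w2_def w3_def A2_def rep_lists)
  qed
  show "regular J"
    unfolding J_eq
    by (rule fq_regular, rule fq_Un) (rule fq_sh)+
  show "\<forall>w\<in>lists A2. \<exists>u\<in>J. rps_eq u w"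
    using nf_exists by (simp add: rps_eq_def)
  show "\<forall>a\<in>{[]} \<union> {[x] |x. x \<in> A2}.
       regular ((\<lambda>(u, v). deltaR u v) ` {(u, v). u \<in> J \<and> v \<in> J \<and> rps_eq (u @ a) v}) \<and>
       regular ((\<lambda>(u, v). deltaR u v) ` {(u, v). u \<in> J \<and> v \<in> J \<and> rps_eq (a @ u) v}) \<and>
       regular ((\<lambda>(u, v). deltaL u v) ` {(u, v). u \<in> J \<and> v \<in> J \<and> rps_eq (u @ a) v}) \<and>
       regular ((\<lambda>(u, v). deltaL u v) ` {(u, v). u \<in> J \<and> v \<in> J \<and> rps_eq (a @ u) v})"
  proof
    fix a assume "a \<in> {[]} \<union> {[x] |x. x \<in> A2}"
    then have "a = [] \<or> a = [1] \<or> a = [2]" by (auto simp: A2_def)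
    then show "regular ((\<lambda>(u, v). deltaR u v) ` {(u, v). u \<in> J \<and> v \<in> J \<and> rps_eq (u @ a) v}) \<and>
       regular ((\<lambda>(u, v). deltaR u v) ` {(u, v). u \<in> J \<and> v \<in> J \<and> rps_eq (a @ u) v}) \<and>
       regular ((\<lambda>(u, v). deltaL u v) ` {(u, v). u \<in> J \<and> v \<in> J \<and> rps_eq (u @ a) v}) \<and>
       regular ((\<lambda>(u, v). deltaL u v) ` {(u, v). u \<in> J \<and> v \<in> J \<and> rps_eq (a @ u) v})"
    proof (elim disjE)
      assume "a = []" then show ?thesis using rR_E rR_E' rL_E rL_E' by simp
    next
      assume "a = [1]" then show ?thesis using rR_R1 rR_L1 rL_R1 rL_L1 by simp
    next
      assume "a = [2]" then show ?thesis using rR_R2 rR_L2 rL_R2 rL_L2 by simp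
    qed
  qed
qed

end
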